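(* Let $\Omega\subset\mathbb{R}^2$ be a bounded polygonal domain with an admissible mesh, let $\Delta t>0$, $\varepsilon>0$, $\rho\in(0,1]$, $0<M^D<1$, $d_1,d_2>0$, $\kappa_1,\kappa_2,\kappa_3\ge0$, $\kappa_4>0$, $a\ge1$, $b\ge0$, and let $(S^{k-1}_K)_K$, $(M^{k-1}_K)_K$ satisfy $0\le S^{k-1}_K\le1$, $0\le M^{k-1}_K<1$ for all $K\in\mathcal{T}$. Let $(S^\varepsilon,W^\varepsilon)$ be a solution of the system $$\frac{\mathrm{m}(K)}{\Delta t}(S^\varepsilon_K-\rho S^{k-1}_K)-\rho d_1\sum_{\sigma\in\mathcal{E}_K}\tau_\sigma\mathrm{D}_{K,\sigma}S^\varepsilon=\rho\,\mathrm{m}(K)g([S^\varepsilon_K]_+,M^\varepsilon_K),$$ $$\varepsilon\Big(\mathrm{m}(K)W^\varepsilon_K-\sum_{\sigma\in\mathcal{E}_K}\tau_\sigma\mathrm{D}_{K,\sigma}W^\varepsilon\Big)=-\rho\frac{\mathrm{m}(K)}{\Delta t}(M^\varepsilon_K-M^{k-1}_K)+\rho d_2\sum_{\sigma\in\mathcal{E}_K}\tau_\sigma\mathrm{D}_{K,\sigma}F(M^\varepsilon)+\rho\,\mathrm{m}(K)h([S^\varepsilon_K]_+,M^\varepsilon_K)$$ for all $K\in\mathcal{T}$, with boundary values $S^\varepsilon_\sigma=1$, $W^\varepsilon_\sigma=0$ for $\sigma\in\mathcal{E}_{\rm ext}$, where $M^\varepsilon_K\in(0,1)$ is the unique solution of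 $W^\varepsilon_K=F(M^\varepsilon_K)-F(M^D)+\varepsilon\log(M^\varepsilon_K/M^D)$. Then $0\le S^\varepsilon_K\le1$ for all $K\in\mathcal{T}$.
   Context: $f(M)=M^b/(1-M)^a$, $F(M)=\int_0^Mf(s)ds$ for $M\in[0,1)$; $g(S,M)=-\kappa_1\frac{SM}{\kappa_4+S}$, $h(S,M)=\kappa_3\frac{SM}{\kappa_4+S}-\kappa_2M$; $[z]_+=\max\{0,z\}$. Admissible mesh (Eymard–Gallouët–Herbin): open polygonal control volumes $\mathcal{T}$ partitioning $\Omega$, edges $\mathcal{E}=\mathcal{E}_{\rm int}\cup\mathcal{E}_{\rm ext}$, points $x_K$ with $\overline{x_Kx_L}$ orthogonal to each interior edge $\sigma=K|L$; $\mathcal{E}_K$ the edges of $K$. $\mathrm{d}_\sigma=\mathrm{d}(x_K,x_L)$ for $\sigma=K|L$, $\mathrm{d}_\sigma=\mathrm{d}(x_K,\sigma)$ for boundary edges; $\tau_\sigma=\mathrm{m}(\sigma)/\mathrm{d}_\sigma$ ($\mathrm{m}$ = Lebesgue measure). For a vector $v$ with cell values $v_K$ and boundary values $v_\sigma$: $v_{K,\sigma}=v_L$ if $\sigma=K|L$, $v_{K,\sigma}=v_\sigma$ if $\sigma\subset\partial\Omega$; $\mathrm{D}_{K,\sigma}v=v_{K,\sigma}-v_K$. $F(M^\varepsilon)$ has entries $F(M^\varepsilon_K)$ and boundary entries $F(M^D)$. *)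

theory Defs
  imports "HOL-Analysis.Analysis"
begin

type_synonym pt = "real^2"
type_synonym cell = "pt set"
(* an edge is represented by its two end points; the edge itself is the closed segment *)
type_synonym edge = "pt \<times> pt"

definition seg :: "edge \<Rightarrow> pt set" where
  "seg e = closed_segment (fst e) (snd e)"

definition elen :: "edge \<Rightarrow> real" where
  "elen e = dist (fst e) (snd e)"

definition mK :: "cell \<Rightarrow> real" where
  "mK K = measure lebesgue K"

definition edges_of :: "edge set \<Rightarrow> cell \<Rightarrow> edge set" where
  "edges_of E K = {\<sigma>\<in>E. seg \<sigma> \<subseteq> frontier K}"

definition is_int_edge :: "cell set \<Rightarrow> edge \<Rightarrow> bool" where
  "is_int_edge T \<sigma> \<longleftrightarrow> (\<exists>K\<in>T. \<exists>L\<in>T. K \<noteq> L \<and> seg \<sigma> = closure K \<inter> closure L)"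

definition E_int :: "cell set \<Rightarrow> edge set \<Rightarrow> edge set" where
  "E_int T E = {\<sigma>\<in>E. is_int_edge T \<sigma>}"

definition E_ext :: "pt set \<Rightarrow> edge set \<Rightarrow> edge set" where
  "E_ext \<Omega> E = {\<sigma>\<in>E. seg \<sigma> \<subseteq> frontier \<Omega>}"

definition nbr :: "cell set \<Rightarrow> edge set \<Rightarrow> cell \<Rightarrow> edge \<Rightarrow> cell" where
  "nbr T E K \<sigma> = (THE L. L \<in> T \<and> L \<noteq> K \<and> \<sigma> \<in> edges_of E L)"

(* Admissible mesh in the sense of Eymard--Gallouet--Herbin, for a bounded
   polygonal domain Omega in R^2 *)
definition admissible_mesh :: "pt set \<Rightarrow> cell set \<Rightarrow> edge set \<Rightarrow> (cell \<Rightarrow> pt) \<Rightarrow> bool" where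
  "admissible_mesh \<Omega> T E x \<longleftrightarrow>
     open \<Omega> \<and> connected \<Omega> \<and> bounded \<Omega> \<and> \<Omega> \<noteq> {} \<and>
     finite T \<and> finite E \<and>
     (\<forall>K\<in>T. open K \<and> K \<noteq> {} \<and> K \<subseteq> \<Omega>) \<and>
     (\<forall>K\<in>T. \<forall>L\<in>T. K \<noteq> L \<longrightarrow> K \<inter> L = {}) \<and>
     closure \<Omega> = \<Union>(closure ` T) \<and>
     (\<forall>\<sigma>\<in>E. fst \<sigma> \<noteq> snd \<sigma>) \<and> inj_on seg E \<and>
     E = E_int T E \<union> E_ext \<Omega> E \<and> E_int T E \<inter> E_ext \<Omega> E = {} \<and>
     frontier \<Omega> = \<Union>(seg ` E_ext \<Omega> E) \<and>
     (\<forall>K\<in>T. frontier K = \<Union>(seg ` edges_of E K)) \<and>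
     (\<forall>\<sigma>\<in>E_ext \<Omega> E. \<exists>K\<in>T. \<sigma> \<in> edges_of E K) \<and>
     (\<forall>K\<in>T. x K \<in> closure K) \<and>
     (\<forall>K\<in>T. \<forall>L\<in>T. \<forall>\<sigma>\<in>E. K \<noteq> L \<longrightarrow> seg \<sigma> = closure K \<inter> closure L \<longrightarrow>
         x K \<noteq> x L \<and> (x L - x K) \<bullet> (snd \<sigma> - fst \<sigma>) = 0) \<and>
     (\<forall>K\<in>T. \<forall>\<sigma>\<in>edges_of E K \<inter> E_ext \<Omega> E.
         x K \<notin> seg \<sigma> \<and> (\<exists>y\<in>seg \<sigma>. (x K - y) \<bullet> (snd \<sigma> - fst \<sigma>) = 0))"

definition d_edge :: "cell set \<Rightarrow> edge set \<Rightarrow> (cell \<Rightarrow> pt) \<Rightarrow> cell \<Rightarrow> edge \<Rightarrow> real" where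
  "d_edge T E x K \<sigma> =
     (if is_int_edge T \<sigma> then dist (x K) (x (nbr T E K \<sigma>)) else infdist (x K) (seg \<sigma>))"

definition tau :: "cell set \<Rightarrow> edge set \<Rightarrow> (cell \<Rightarrow> pt) \<Rightarrow> cell \<Rightarrow> edge \<Rightarrow> real" where
  "tau T E x K \<sigma> = elen \<sigma> / d_edge T E x K \<sigma>"

definition Dks :: "cell set \<Rightarrow> edge set \<Rightarrow> (cell \<Rightarrow> real) \<Rightarrow> real \<Rightarrow> cell \<Rightarrow> edge \<Rightarrow> real" where
  "Dks T E v vb K \<sigma> = (if is_int_edge T \<sigma> then v (nbr T E K \<sigma>) else vb) - v K"

definition flux :: "cell set \<Rightarrow> edge set \<Rightarrow> (cell \<Rightarrow> pt) \<Rightarrow> (cell \<Rightarrow> real) \<Rightarrow> real \<Rightarrow> cell \<Rightarrow> real" where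
  "flux T E x v vb K = (\<Sum>\<sigma>\<in>edges_of E K. tau T E x K \<sigma> * Dks T E v vb K \<sigma>)"

definition f_fun :: "real \<Rightarrow> real \<Rightarrow> real \<Rightarrow> real" where
  "f_fun a b M = M powr b / (1 - M) powr a"

definition F_fun :: "real \<Rightarrow> real \<Rightarrow> real \<Rightarrow> real" where
  "F_fun a b M = integral {0..M} (f_fun a b)"

definition g_fun :: "real \<Rightarrow> real \<Rightarrow> real \<Rightarrow> real \<Rightarrow> real" where
  "g_fun \<kappa>1 \<kappa>4 S M = - \<kappa>1 * (S * M) / (\<kappa>4 + S)"

definition h_fun :: "real \<Rightarrow> real \<Rightarrow> real \<Rightarrow> real \<Rightarrow> real \<Rightarrow> real" where
  "h_fun \<kappa>2 \<kappa>3 \<kappa>4 S M = \<kappa>3 * (S * M) / (\<kappa>4 + S) - \<kappa>2 * M"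

definition pos_part :: "real \<Rightarrow> real" where
  "pos_part z = max 0 z"

end

theory Submission
  imports Defs
begin

lemma mK_pos:
  assumes "open (K::pt set)" "bounded K" "K \<noteq> {}"
  shows "mK K > 0"
proof -
  obtain z where z: "z \<in> K" using assms by auto
  obtain e where e: "e > 0" "ball z e \<subseteq> K" using assms(1) z open_contains_ball by blast
  have Kl: "K \<in> lmeasurable" using assms by (simp add: bounded_set_imp_lmeasurable borel_open)
  have "measure lebesgue (ball z e) = measure lborel (ball z e)"
    by (simp add: measure_completion)
  also have "\<dots> > 0" using e content_ball_pos by blast
  finally have "0 < measure lebesgue (ball z e)" .
  also have "\<dots> \<le> measure lebesgue K"
    by (rule measure_mono_fmeasurable[OF e(2)]) (auto simp: Kl)
  finally show ?thesis by (simp add: mK_def)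
qed

lemma seg_hyp_finite:
  fixes a b n :: pt
  assumes "\<not> closed_segment a b \<subseteq> {y. n \<bullet> y = c}"
  shows "finite (closed_segment a b \<inter> {y. n \<bullet> y = c})"
proof (cases "n \<bullet> b = n \<bullet> a")
  case True
  have "\<forall>y\<in>closed_segment a b. n \<bullet> y = n \<bullet> a"
  proof
    fix y assume "y \<in> closed_segment a b"
    then obtain u where u: "y = (1 - u) *\<^sub>R a + u *\<^sub>R b" by (auto simp: closed_segment_def)
    show "n \<bullet> y = n \<bullet> a" using True unfolding u by (simp add: inner_add_right algebra_simps)
  qed
  then have "n \<bullet> a \<noteq> c"
  proof (intro notI)
    assume "n \<bullet> a = c"
    then have "closed_segment a b \<subseteq> {y. n \<bullet> y = c}" using \<open>\<forall>y\<in>closed_segment a b. n \<bullet> y = n \<bullet> a\<close> by blast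
    with assms show False by blast
  qed
  then have "closed_segment a b \<inter> {y. n \<bullet> y = c} = {}"
    using \<open>\<forall>y\<in>closed_segment a b. n \<bullet> y = n \<bullet> a\<close> by (intro equals0I) (metis IntE mem_Collect_eq)
  then show ?thesis by (metis finite.emptyI)
next
  case False
  define u0 where "u0 = (c - n \<bullet> a) / (n \<bullet> b - n \<bullet> a)"
  have "closed_segment a b \<inter> {y. n \<bullet> y = c} \<subseteq> {(1 - u0) *\<^sub>R a + u0 *\<^sub>R b}"
  proof
    fix y assume y: "y \<in> closed_segment a b \<inter> {y. n \<bullet> y = c}"
    then obtain u where u: "y = (1 - u) *\<^sub>R a + u *\<^sub>R b" by (auto simp: closed_segment_def)
    have "n \<bullet> y = n \<bullet> a + u * (n \<bullet> b - n \<bullet> a)" unfolding u by (simp add: inner_diff_left algebra_simps)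
    then have "n \<bullet> a + u * (n \<bullet> b - n \<bullet> a) = c" using y by simp
    then have "u * (n \<bullet> b - n \<bullet> a) = c - n \<bullet> a" by linarith
    moreover have "n \<bullet> b - n \<bullet> a \<noteq> 0" using False by simp
    ultimately have "u = u0" unfolding u0_def by (simp add: eq_divide_eq)
    then show "y \<in> {(1 - u0) *\<^sub>R a + u0 *\<^sub>R b}" using u by simp
  qed
  then show ?thesis using finite_subset by blast
qed


lemma mesh_D:
  assumes "admissible_mesh \<Omega> T E x"
  shows "finite T" "finite E" "bounded \<Omega>"
    "\<forall>K\<in>T. open K \<and> K \<noteq> {} \<and> K \<subseteq> \<Omega>"
    "\<forall>K\<in>T. \<forall>L\<in>T. K \<noteq> L \<longrightarrow> K \<inter> L = {}"
    "\<forall>\<sigma>\<in>E. fst \<sigma> \<noteq> snd \<sigma>"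
    "\<forall>K\<in>T. frontier K = \<Union>(seg ` edges_of E K)"
  apply (insert assms[unfolded admissible_mesh_def])
  apply (elim conjE, assumption)+
  done

lemma closure_meet:
  fixes S L :: "pt set"
  assumes "open S" "z \<in> closure L" "z \<in> S" shows "S \<inter> L \<noteq> {}"
  using assms open_Int_closure_eq_empty by auto

lemma prop3:
  fixes a1 a2 a3 b1 b2 b3 n m :: bool
  shows "(a1 \<and> n) \<or> (b1 \<and> m) \<Longrightarrow> (a2 \<and> n) \<or> (b2 \<and> m) \<Longrightarrow> (a3 \<and> n) \<or> (b3 \<and> m) \<Longrightarrow>
    \<not> (a1 \<and> n \<and> a2) \<Longrightarrow> \<not> (b1 \<and> m \<and> b2) \<Longrightarrow> \<not> (a1 \<and> n \<and> a3) \<Longrightarrow> \<not> (b1 \<and> m \<and> b3) \<Longrightarrow>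
    \<not> (a2 \<and> n \<and> a3) \<Longrightarrow> \<not> (b2 \<and> m \<and> b3) \<Longrightarrow> False"
  by blast

lemma three_cells:
  assumes mesh: "admissible_mesh \<Omega> T E x" and \<sigma>: "\<sigma> \<in> E"
    and L: "L1 \<in> T" "L2 \<in> T" "L3 \<in> T" "L1 \<noteq> L2" "L1 \<noteq> L3" "L2 \<noteq> L3"
    and fr: "seg \<sigma> \<subseteq> frontier L1" "seg \<sigma> \<subseteq> frontier L2" "seg \<sigma> \<subseteq> frontier L3"
  shows False
proof -
  define a where "a = fst \<sigma>"
  define b where "b = snd \<sigma>"
  have ab: "a \<noteq> b" using mesh_D(6)[OF mesh] \<sigma> unfolding a_def b_def by blast
  have DIM: "2 \<le> DIM(pt)" by simp
  obtain n :: pt where n: "n \<noteq> 0" "orthogonal (b - a) n"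
    using orthogonal_to_vector_exists[OF DIM, of "b - a"] by blast
  define c where "c = n \<bullet> a"
  define H where "H = {y. n \<bullet> y = c}"
  have segH: "seg \<sigma> \<subseteq> H"
  proof
    fix y assume "y \<in> seg \<sigma>"
    then obtain u where u: "y = (1 - u) *\<^sub>R a + u *\<^sub>R b"
      unfolding seg_def closed_segment_def a_def b_def by blast
    have "n \<bullet> (b - a) = 0" using n(2) by (simp add: orthogonal_def inner_commute)
    then have nb: "n \<bullet> b = n \<bullet> a" by (simp add: inner_diff_right)
    have "n \<bullet> y = n \<bullet> a" using nb unfolding u by (simp add: inner_add_right algebra_simps)
    then show "y \<in> H" unfolding H_def c_def by blast
  qed
  define C where "C = \<Union> (seg ` {e\<in>E. \<not> seg e \<subseteq> H})"
  have finE: "finite E" using mesh_D(2)[OF mesh] .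
  have clC: "closed C" unfolding C_def
    by (intro closed_Union) (auto simp: finE seg_def)
  have finC: "finite (seg \<sigma> \<inter> C)"
  proof -
    have "seg \<sigma> \<inter> C \<subseteq> \<Union> ((\<lambda>e. seg e \<inter> H) ` {e\<in>E. \<not> seg e \<subseteq> H})"
      using segH unfolding C_def by blast
    moreover have "finite (\<Union> ((\<lambda>e. seg e \<inter> H) ` {e\<in>E. \<not> seg e \<subseteq> H}))"
    proof (rule finite_Union)
      show "finite ((\<lambda>e. seg e \<inter> H) ` {e\<in>E. \<not> seg e \<subseteq> H})" using finE by simp
      show "\<And>M. M \<in> (\<lambda>e. seg e \<inter> H) ` {e\<in>E. \<not> seg e \<subseteq> H} \<Longrightarrow> finite M"
        unfolding H_def seg_def using seg_hyp_finite by blast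
    qed
    ultimately show ?thesis using finite_subset by blast
  qed
  have inf: "infinite (seg \<sigma>)" using ab by (simp add: seg_def a_def b_def)
  have "\<not> seg \<sigma> \<subseteq> C"
  proof
    assume "seg \<sigma> \<subseteq> C"
    then have "seg \<sigma> \<inter> C = seg \<sigma>" by blast
    with finC inf show False by simp
  qed
  then obtain p where p: "p \<in> seg \<sigma>" "p \<notin> C" by blast
  obtain r where r: "r > 0" "ball p r \<subseteq> - C"
    using clC p(2) open_contains_ball[of "- C"] by (auto simp: closed_def)
  define Hp where "Hp = ball p r \<inter> {y. n \<bullet> y > c}"
  define Hm where "Hm = ball p r \<inter> {y. n \<bullet> y < c}"
  have conn: "connected Hp" "connected Hm" unfolding Hp_def Hm_def
    by (intro convex_connected convex_Int convex_ball convex_halfspace_gt convex_halfspace_lt)+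
  have frL: "frontier L = \<Union> (seg ` edges_of E L)" if "L \<in> T" for L
    using mesh_D(7)[OF mesh] that by blast
  have noH: "n \<bullet> y = c" if A: "y \<in> ball p r" "y \<in> frontier L" "L \<in> T" for y L
  proof -
    obtain e where e: "e \<in> edges_of E L" "y \<in> seg e" using frL[OF A(3)] A(2) by blast
    have "e \<in> E" using e(1) unfolding edges_of_def by blast
    moreover have "y \<notin> C" using r(2) A(1) by blast
    ultimately have "seg e \<subseteq> H" using e(2) unfolding C_def by blast
    then show ?thesis using e(2) unfolding H_def by blast
  qed
  have nofr: "Hp \<inter> frontier L = {}" "Hm \<inter> frontier L = {}" if "L \<in> T" for L
    using noH[OF _ _ that] unfolding Hp_def Hm_def by force+
  have oL: "open L" if "L \<in> T" for L using mesh_D(4)[OF mesh] that by blast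
  have key: "(Hp \<subseteq> L \<and> Hp \<noteq> {}) \<or> (Hm \<subseteq> L \<and> Hm \<noteq> {})" if LT: "L \<in> T" "seg \<sigma> \<subseteq> frontier L" for L
  proof -
    have "p \<in> closure L" using p(1) LT(2) frontier_def by blast
    then have ne: "ball p r \<inter> L \<noteq> {}" using closure_meet[of "ball p r"] r(1) by simp
    have "\<not> (ball p r \<inter> L \<subseteq> H)"
    proof
      assume "ball p r \<inter> L \<subseteq> H"
      moreover have "open (ball p r \<inter> L)" using oL[OF LT(1)] by blast
      ultimately have "ball p r \<inter> L \<subseteq> interior H" using interior_maximal by blast
      also have "interior H = {}" unfolding H_def using n(1) by simp
      finally show False using ne by blast
    qed
    then obtain y where y: "y \<in> ball p r" "y \<in> L" "n \<bullet> y \<noteq> c" unfolding H_def by blast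
    show ?thesis
    proof (cases "n \<bullet> y > c")
      case True
      then have I: "Hp \<inter> L \<noteq> {}" using y unfolding Hp_def by blast
      have "Hp \<subseteq> L"
      proof (rule ccontr)
        assume "\<not> Hp \<subseteq> L"
        then have "Hp - L \<noteq> {}" by blast
        from connected_Int_frontier[OF conn(1) I this] nofr(1)[OF LT(1)] show False by blast
      qed
      then show ?thesis using I by blast
    next
      case False
      then have "n \<bullet> y < c" using y(3) by linarith
      then have I: "Hm \<inter> L \<noteq> {}" using y unfolding Hm_def by blast
      have "Hm \<subseteq> L"
      proof (rule ccontr)
        assume "\<not> Hm \<subseteq> L"
        then have "Hm - L \<noteq> {}" by blast
        from connected_Int_frontier[OF conn(2) I this] nofr(2)[OF LT(1)] show False by blast
      qed
      then show ?thesis using I by blast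
    qed
  qed
  have disj: "L1 \<inter> L2 = {}" "L1 \<inter> L3 = {}" "L2 \<inter> L3 = {}"
    using mesh_D(5)[OF mesh] L by blast+
  have c1: "\<not> (X \<subseteq> A \<and> X \<noteq> {} \<and> X \<subseteq> B)" if "A \<inter> B = {}" for X A B :: "pt set"
    using that by blast
  have k1: "(Hp \<subseteq> L1 \<and> Hp \<noteq> {}) \<or> (Hm \<subseteq> L1 \<and> Hm \<noteq> {})" using key[OF L(1) fr(1)] .
  have k2: "(Hp \<subseteq> L2 \<and> Hp \<noteq> {}) \<or> (Hm \<subseteq> L2 \<and> Hm \<noteq> {})" using key[OF L(2) fr(2)] .
  have k3: "(Hp \<subseteq> L3 \<and> Hp \<noteq> {}) \<or> (Hm \<subseteq> L3 \<and> Hm \<noteq> {})" using key[OF L(3) fr(3)] .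
  have f: "\<not> (Hp \<subseteq> L1 \<and> Hp \<noteq> {} \<and> Hp \<subseteq> L2)" "\<not> (Hm \<subseteq> L1 \<and> Hm \<noteq> {} \<and> Hm \<subseteq> L2)"
    "\<not> (Hp \<subseteq> L1 \<and> Hp \<noteq> {} \<and> Hp \<subseteq> L3)" "\<not> (Hm \<subseteq> L1 \<and> Hm \<noteq> {} \<and> Hm \<subseteq> L3)"
    "\<not> (Hp \<subseteq> L2 \<and> Hp \<noteq> {} \<and> Hp \<subseteq> L3)" "\<not> (Hm \<subseteq> L2 \<and> Hm \<noteq> {} \<and> Hm \<subseteq> L3)"
    by (rule c1[OF disj(1)] c1[OF disj(2)] c1[OF disj(3)])+
  show False by (rule prop3[OF k1 k2 k3 f])
qed


lemma frontier_common:
  fixes K L :: "pt set"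
  assumes "open K" "open L" "K \<inter> L = {}"
  shows "closure K \<inter> closure L \<subseteq> frontier K"
proof
  fix z assume z: "z \<in> closure K \<inter> closure L"
  have "z \<notin> K"
  proof
    assume "z \<in> K"
    then have "K \<inter> L \<noteq> {}" using closure_meet[OF assms(1)] z by blast
    then show False using assms(3) by blast
  qed
  then show "z \<in> frontier K" using z assms(1) unfolding frontier_def by (simp add: interior_open)
qed

lemma nbr_in_T:
  assumes mesh: "admissible_mesh \<Omega> T E x" and K: "K \<in> T"
    and \<sigma>K: "\<sigma> \<in> edges_of E K" and int: "is_int_edge T \<sigma>"
  shows "nbr T E K \<sigma> \<in> T"
proof -
  have \<sigma>E: "\<sigma> \<in> E" using \<sigma>K unfolding edges_of_def by blast
  obtain K' L' where KL: "K' \<in> T" "L' \<in> T" "K' \<noteq> L'" "seg \<sigma> = closure K' \<inter> closure L'"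
    using int unfolding is_int_edge_def by blast
  have oK': "open K'" "open L'" using mesh_D(4)[OF mesh] KL by blast+
  have dK: "K' \<inter> L' = {}" using mesh_D(5)[OF mesh] KL by blast
  have e1: "\<sigma> \<in> edges_of E K'"
    using frontier_common[OF oK' dK] KL(4) \<sigma>E unfolding edges_of_def by blast
  have dL: "L' \<inter> K' = {}" using dK by blast
  have e2: "\<sigma> \<in> edges_of E L'"
    using frontier_common[OF oK'(2) oK'(1) dL] KL(4) \<sigma>E unfolding edges_of_def by (simp add: Int_commute)
  have fr: "seg \<sigma> \<subseteq> frontier L" if "\<sigma> \<in> edges_of E L" for L
    using that unfolding edges_of_def by blast
  have uniq: "L = L0" if A: "L \<in> T" "L \<noteq> K" "\<sigma> \<in> edges_of E L" "L0 \<in> T" "L0 \<noteq> K" "\<sigma> \<in> edges_of E L0" for L L0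
  proof (rule ccontr)
    assume "L \<noteq> L0"
    then show False
      using three_cells[OF mesh \<sigma>E K A(1) A(4) _ _ \<open>L \<noteq> L0\<close> fr[OF \<sigma>K] fr[OF A(3)] fr[OF A(6)]] A(2) A(5)
      by metis
  qed
  obtain L0 where L0: "L0 \<in> T" "L0 \<noteq> K" "\<sigma> \<in> edges_of E L0"
  proof (cases "K = K'")
    case True
    then show ?thesis using that[of L'] KL e2 by blast
  next
    case False
    then show ?thesis using that[of K'] KL e1 by blast
  qed
  have "\<exists>!L. L \<in> T \<and> L \<noteq> K \<and> \<sigma> \<in> edges_of E L"
    using L0 uniq by blast
  from theI'[OF this] show ?thesis unfolding nbr_def by blast
qed

theorem lemma3p1:
  fixes \<Omega> :: "pt set" and T :: "cell set" and E :: "edge set" and x :: "cell \<Rightarrow> pt"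
    and \<Delta>t \<epsilon> \<rho> MD d1 d2 \<kappa>1 \<kappa>2 \<kappa>3 \<kappa>4 a b :: real
    and Sold Mold S W M :: "cell \<Rightarrow> real"
  assumes mesh: "admissible_mesh \<Omega> T E x"
    and dt: "\<Delta>t > 0" and eps: "\<epsilon> > 0" and rho: "0 < \<rho>" "\<rho> \<le> 1"
    and MD: "0 < MD" "MD < 1" and d: "d1 > 0" "d2 > 0"
    and kap: "\<kappa>1 \<ge> 0" "\<kappa>2 \<ge> 0" "\<kappa>3 \<ge> 0" "\<kappa>4 > 0"
    and ab: "a \<ge> 1" "b \<ge> 0"
    and old: "\<And>K. K \<in> T \<Longrightarrow> 0 \<le> Sold K \<and> Sold K \<le> 1 \<and> 0 \<le> Mold K \<and> Mold K < 1"
    and Mdef: "\<And>K. K \<in> T \<Longrightarrow> 0 < M K \<and> M K < 1 \<and>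
                 W K = F_fun a b (M K) - F_fun a b MD + \<epsilon> * ln (M K / MD)"
    and eqS: "\<And>K. K \<in> T \<Longrightarrow>
        mK K / \<Delta>t * (S K - \<rho> * Sold K) - \<rho> * d1 * flux T E x S 1 K
          = \<rho> * mK K * g_fun \<kappa>1 \<kappa>4 (pos_part (S K)) (M K)"
    and eqW: "\<And>K. K \<in> T \<Longrightarrow>
        \<epsilon> * (mK K * W K - flux T E x W 0 K)
          = - \<rho> * mK K / \<Delta>t * (M K - Mold K)
            + \<rho> * d2 * flux T E x (\<lambda>L. F_fun a b (M L)) (F_fun a b MD) K
            + \<rho> * mK K * h_fun \<kappa>2 \<kappa>3 \<kappa>4 (pos_part (S K)) (M K)"
  shows "\<forall>K\<in>T. 0 \<le> S K \<and> S K \<le> 1"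
  proof -
  have finT: "finite T" using mesh_D(1)[OF mesh] .
  have finE: "finite E" using mesh_D(2)[OF mesh] .
  have finEK: "finite (edges_of E K)" for K
    using finE unfolding edges_of_def by simp
  have tau_nn: "tau T E x K \<sigma> \<ge> 0" for K \<sigma>
  proof -
    have "elen \<sigma> \<ge> 0" unfolding elen_def by simp
    moreover have "d_edge T E x K \<sigma> \<ge> 0" unfolding d_edge_def by (simp add: infdist_nonneg)
    ultimately show ?thesis unfolding tau_def by simp
  qed
  have mpos: "mK K > 0" if "K \<in> T" for K
  proof -
    have "open K" "K \<noteq> {}" "K \<subseteq> \<Omega>" using mesh_D(4)[OF mesh] that by blast+
    moreover have "bounded K" using mesh_D(3)[OF mesh] \<open>K \<subseteq> \<Omega>\<close> bounded_subset by blast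
    ultimately show ?thesis using mK_pos by blast
  qed
  have c: "mK K / \<Delta>t > 0" if "K \<in> T" for K using mpos[OF that] dt by simp
  show ?thesis
  proof (cases "T = {}")
    case True then show ?thesis by simp
  next
    case False
    define mn where "mn = Min (S ` T)"
    define mx where "mx = Max (S ` T)"
    have "mn \<in> S ` T" unfolding mn_def using finT False by simp
    then obtain K0 where K0: "K0 \<in> T" "S K0 = mn" by blast
    have K0min: "S K0 \<le> S L" if "L \<in> T" for L unfolding K0(2) mn_def using finT that by simp
    have "mx \<in> S ` T" unfolding mx_def using finT False by simp
    then obtain K1 where K1: "K1 \<in> T" "S K1 = mx" by blast
    have K1max: "S L \<le> S K1" if "L \<in> T" for L unfolding K1(2) mx_def using finT that by simp
    have low: "0 \<le> S K0"
    proof (rule ccontr)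
      assume neg: "\<not> 0 \<le> S K0"
      have g0: "g_fun \<kappa>1 \<kappa>4 (pos_part (S K0)) (M K0) = 0"
        using neg unfolding g_fun_def pos_part_def by simp
      have "flux T E x S 1 K0 \<ge> 0"
        unfolding flux_def
      proof (rule sum_nonneg)
        fix \<sigma> assume \<sigma>: "\<sigma> \<in> edges_of E K0"
        have "Dks T E S 1 K0 \<sigma> \<ge> 0"
        proof (cases "is_int_edge T \<sigma>")
          case True
          then show ?thesis using K0min[OF nbr_in_T[OF mesh K0(1) \<sigma> True]] unfolding Dks_def by simp
        next
          case False
          then show ?thesis using neg unfolding Dks_def by simp
        qed
        then show "tau T E x K0 \<sigma> * Dks T E S 1 K0 \<sigma> \<ge> 0" using tau_nn by simp
      qed
      then have "\<rho> * d1 * flux T E x S 1 K0 \<ge> 0" using rho d by simp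
      then have "mK K0 / \<Delta>t * (S K0 - \<rho> * Sold K0) \<ge> 0" using eqS[OF K0(1)] g0 by simp
      then have "S K0 - \<rho> * Sold K0 \<ge> 0" using c[OF K0(1)] mult_pos_neg[of "mK K0 / \<Delta>t" "S K0 - \<rho> * Sold K0"] by linarith
      moreover have "\<rho> * Sold K0 \<ge> 0" using old[OF K0(1)] rho by simp
      ultimately show False using neg by linarith
    qed
    have up: "S K1 \<le> 1"
    proof (rule ccontr)
      assume big: "\<not> S K1 \<le> 1"
      have g0: "g_fun \<kappa>1 \<kappa>4 (pos_part (S K1)) (M K1) \<le> 0"
      proof -
        have "pos_part (S K1) = S K1" using big unfolding pos_part_def by simp
        moreover have "\<kappa>1 * (S K1 * M K1) / (\<kappa>4 + S K1) \<ge> 0"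
          using big kap Mdef[OF K1(1)] by simp
        ultimately show ?thesis unfolding g_fun_def by simp
      qed
      have "flux T E x S 1 K1 \<le> 0"
        unfolding flux_def
      proof (rule sum_nonpos)
        fix \<sigma> assume \<sigma>: "\<sigma> \<in> edges_of E K1"
        have "Dks T E S 1 K1 \<sigma> \<le> 0"
        proof (cases "is_int_edge T \<sigma>")
          case True
          then show ?thesis using K1max[OF nbr_in_T[OF mesh K1(1) \<sigma> True]] unfolding Dks_def by simp
        next
          case False
          then show ?thesis using big unfolding Dks_def by simp
        qed
        then show "tau T E x K1 \<sigma> * Dks T E S 1 K1 \<sigma> \<le> 0" using tau_nn by (simp add: mult_nonneg_nonpos)
      qed
      then have "\<rho> * d1 * flux T E x S 1 K1 \<le> 0" using rho d by (simp add: mult_nonneg_nonpos)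
      moreover have "\<rho> * mK K1 * g_fun \<kappa>1 \<kappa>4 (pos_part (S K1)) (M K1) \<le> 0"
        using g0 rho mpos[OF K1(1)] by (simp add: mult_nonneg_nonpos)
      ultimately have "mK K1 / \<Delta>t * (S K1 - \<rho> * Sold K1) \<le> 0" using eqS[OF K1(1)] by linarith
      then have "S K1 - \<rho> * Sold K1 \<le> 0" using c[OF K1(1)] mult_pos_pos[of "mK K1 / \<Delta>t" "S K1 - \<rho> * Sold K1"] by linarith
      moreover have "\<rho> * Sold K1 \<le> 1" using old[OF K1(1)] rho by (simp add: mult_le_one)
      ultimately show False using big by linarith
    qed
    show ?thesis using low up K0min K1max by force
  qed
qed

end
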